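(* Suppose Assumption 1 holds with $\alpha\in(0,1]$ and let $(f_t)_{t\in\mathbb N}$ be the online gradient descent iterates. Define $$a=2^\alpha L^{1+\frac1\alpha}\kappa^{2(1+\alpha)},\qquad b=\frac{2^\alpha L\kappa^{2(1+\alpha)}}{1+\alpha}\Big[(1-\alpha)+\mathbb E_{(x,y)\sim\rho}\big[|\phi'(y,f_H(x))|^{1+\alpha}\big]\Big].$$ Then for every $t\in\mathbb N$, $$\mathbb E_{z_t}[\mathcal E(f_{t+1})]-\mathcal E(f_H)\le\big(1+a\eta_t^{1+\alpha}\big)\big(\mathcal E(f_t)-\mathcal E(f_H)\big)-\eta_t\|\nabla\mathcal E(f_t)\|^2+b\,\eta_t^{1+\alpha}.$$
   Context: Setting: Let $\mathcal X\subset\mathbb R^d$, $\mathcal Y\subset\mathbb R$, $\mathcal Z=\mathcal X\times\mathcal Y$, and let $\rho$ be a Borel probability measure on $\mathcal Z$. Let $K:\mathcal X\times\mathcal X\to\mathbb R$ be a continuous, symmetric, positive semi-definite kernel with reproducing kernel Hilbert space $H_K$ (inner product $\langle\cdot,\cdot\rangle$, norm $\|\cdot\|$), $K_x:=K(x,\cdot)$, reproducing property $f(x)=\langle f,K_x\rangle$, and $\kappa:=\sup_{x\in\mathcal X}\sqrt{K(x,x)}<\infty$. Let $\phi:\mathcal Y\times\mathbb R\to[0,\infty)$ be a loss function, differentiable in its second argument, and write $\phi'(y,s)$ for its derivative with respect to $s$. The generalization error of $f:\mathcal X\to\mathbb R$ is $\mathcal E(f)=\int_{\mathcal Z}\phi(y,f(x))\,d\rho(x,y)$.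 It is assumed that a minimizer $f_H\in\arg\min_{f\in H_K}\mathcal E(f)$ exists and that $\max\{\sup_{y\in\mathcal Y}\phi(y,0),\ \sup_{(x,y)\in\mathcal Z}\phi(y,f_H(x))\}<\infty$. Let $z_t=(x_t,y_t)$, $t\in\mathbb N$, be i.i.d. samples from $\rho$, let $(\eta_t)_{t\in\mathbb N}$ be positive step sizes, and define the online gradient descent iterates by $f_1=0$ and $f_{t+1}=f_t-\eta_t\phi'(y_t,f_t(x_t))K_{x_t}$ for $t\in\mathbb N$ (so $f_t$ depends only on $z_1,\dots,z_{t-1}$). Assumption 1: for every $y\in\mathcal Y$, $\phi(y,\cdot)$ is convex and differentiable, and there are constants $\alpha\in(0,1]$, $L>0$ with $|\phi'(y,s)-\phi'(y,\tilde s)|\le L|s-\tilde s|^{\alpha}$ for all $s,\tilde s\in\mathbb R$, $y\in\mathcal Y$. $\nabla\mathcal E(f)=\mathbb E_{(x,y)\sim\rho}[\phi'(y,f(x))K_x]\in H_K$ denotes the gradient of $\mathcal E$ at $f\in H_K$. $\mathbb E_{z_t}[\cdot]$ denotes the conditional expectation with respect to $z_t$ given $z_1,\dots,z_{t-1}$. *)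

theory Defs
  imports "HOL-Analysis.Analysis" "HOL-Probability.Probability"
begin

text \<open>Elements of the Hilbert space 'h represent functions in H_K via
  the evaluation  f(x) = f \<bullet> Kx x  (reproducing property).\<close>

definition eval_h :: "'h::real_inner \<Rightarrow> ('x \<Rightarrow> 'h) \<Rightarrow> 'x \<Rightarrow> real" where
  "eval_h f Kx x = f \<bullet> Kx x"

definition gen_err ::
  "('x \<times> real) measure \<Rightarrow> (real \<Rightarrow> real \<Rightarrow> real) \<Rightarrow> ('x \<Rightarrow> 'h::real_inner) \<Rightarrow> 'h \<Rightarrow> real" where
  "gen_err \<rho> \<phi> Kx f = (\<integral>z. \<phi> (snd z) (eval_h f Kx (fst z)) \<partial>\<rho>)"

definition grad_err ::
  "('x \<times> real) measure \<Rightarrow> (real \<Rightarrow> real \<Rightarrow> real) \<Rightarrow> ('x \<Rightarrow> 'h::{real_inner,banach,second_countable_topology}) \<Rightarrow> 'h \<Rightarrow> 'h" where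
  "grad_err \<rho> dphi Kx f = (\<integral>z. dphi (snd z) (eval_h f Kx (fst z)) *\<^sub>R Kx (fst z) \<partial>\<rho>)"

text \<open>Online gradient descent iterates, indexed from 1:
  ogd .. z 1 = 0 and ogd .. z (t+1) = f_t - eta_t phi'(y_t, f_t(x_t)) K_{x_t} for t >= 1,
  where z t = (x_t, y_t) is the t-th sample.  The value at index 0 is a junk value 0.\<close>
primrec ogd ::
  "(nat \<Rightarrow> real) \<Rightarrow> (real \<Rightarrow> real \<Rightarrow> real) \<Rightarrow> ('x \<Rightarrow> 'h::real_inner) \<Rightarrow> (nat \<Rightarrow> 'x \<times> real) \<Rightarrow> nat \<Rightarrow> 'h" where
  "ogd \<eta> dphi Kx z 0 = 0"
| "ogd \<eta> dphi Kx z (Suc t) =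
     (if t = 0 then 0
      else ogd \<eta> dphi Kx z t
           - (\<eta> t * dphi (snd (z t)) (eval_h (ogd \<eta> dphi Kx z t) Kx (fst (z t)))) *\<^sub>R Kx (fst (z t)))"

definition kappa :: "'x set \<Rightarrow> ('x \<Rightarrow> 'x \<Rightarrow> real) \<Rightarrow> real" where
  "kappa X K = (SUP x\<in>X. sqrt (K x x))"

end

theory Submission
  imports Defs
begin


lemma descent1:
  fixes f f' :: "real \<Rightarrow> real"
  assumes deriv: "\<And>s. (f has_real_derivative f' s) (at s)"
    and hold: "\<And>s s'. \<bar>f' s - f' s'\<bar> \<le> L * \<bar>s - s'\<bar> powr \<alpha>"
    and a: "0 < \<alpha>" and L: "0 \<le> L"
  shows "f s' \<le> f s + f' s * (s' - s) + L / (1 + \<alpha>) * \<bar>s' - s\<bar> powr (1 + \<alpha>)"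
proof -
  define d where "d = s' - s"
  define C where "C = L / (1 + \<alpha>) * \<bar>d\<bar> powr (1 + \<alpha>)"
  define h where "h = (\<lambda>\<tau>. f (s + \<tau> * d) - \<tau> * (f' s * d) - C * \<tau> powr (1 + \<alpha>))"
  have "h 1 \<le> h 0"
  proof (rule DERIV_nonpos_imp_decreasing_open[of 0 1 h])
    fix \<tau> :: real assume t: "0 < \<tau>" "\<tau> < 1"
    have d1: "((\<lambda>\<tau>. f (s + \<tau> * d)) has_real_derivative f' (s + \<tau> * d) * d) (at \<tau>)"
      by (rule DERIV_chain2[OF deriv]) (auto intro!: derivative_eq_intros)
    have d2: "((\<lambda>\<tau>. \<tau> powr (1 + \<alpha>)) has_real_derivative (1 + \<alpha>) * \<tau> powr (1 + \<alpha> - 1)) (at \<tau>)"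
      using has_real_derivative_powr[OF t(1), of "1 + \<alpha>"] by simp
    have "(h has_real_derivative f' (s + \<tau> * d) * d - f' s * d - C * ((1 + \<alpha>) * \<tau> powr (1 + \<alpha> - 1))) (at \<tau>)"
      unfolding h_def
      by (intro DERIV_diff d1 DERIV_cmult d2) (auto intro!: derivative_eq_intros)
    moreover have "f' (s + \<tau> * d) * d - f' s * d - C * ((1 + \<alpha>) * \<tau> powr (1 + \<alpha> - 1)) \<le> 0"
    proof -
      have "(f' (s + \<tau> * d) - f' s) * d \<le> \<bar>f' (s + \<tau> * d) - f' s\<bar> * \<bar>d\<bar>"
        by (metis abs_ge_self abs_mult)
      also have "\<dots> \<le> L * \<bar>\<tau> * d\<bar> powr \<alpha> * \<bar>d\<bar>"
        using hold[of "s + \<tau> * d" s] by (intro mult_right_mono) auto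
      also have "\<dots> = L * (\<tau> powr \<alpha> * (\<bar>d\<bar> powr \<alpha> * \<bar>d\<bar>))"
        using t by (simp add: abs_mult powr_mult)
      also have "\<bar>d\<bar> powr \<alpha> * \<bar>d\<bar> = \<bar>d\<bar> powr (1 + \<alpha>)"
        by (simp add: powr_mult_base mult.commute)
      also have "L * (\<tau> powr \<alpha> * \<bar>d\<bar> powr (1 + \<alpha>)) = C * ((1 + \<alpha>) * \<tau> powr (1 + \<alpha> - 1))"
        using a by (simp add: C_def field_simps)
      finally show ?thesis by (simp add: algebra_simps)
    qed
    ultimately show "\<exists>y. (h has_real_derivative y) (at \<tau>) \<and> y \<le> 0" by blast
  next
    have cfU: "continuous_on UNIV f"
      using deriv DERIV_isCont continuous_at_imp_continuous_on by blast
    have c1: "continuous_on {0..1} (\<lambda>\<tau>::real. s + \<tau> * d)" by (intro continuous_intros)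
    have cf: "continuous_on {0..1} (\<lambda>\<tau>. f (s + \<tau> * d))"
      by (rule continuous_on_compose2[OF cfU c1]) simp
    have cp: "continuous_on {0..1} (\<lambda>\<tau>::real. \<tau> powr (1 + \<alpha>))"
      unfolding continuous_on_def
    proof
      fix x :: real assume "x \<in> {0..1}"
      have ev: "eventually (\<lambda>\<tau>::real. \<tau> \<ge> 0) (at x within {0..1})"
        unfolding eventually_at_filter by simp
      have "1 + \<alpha> > 0" using a by simp
      then show "((\<lambda>\<tau>. \<tau> powr (1 + \<alpha>)) \<longlongrightarrow> x powr (1 + \<alpha>)) (at x within {0..1})"
        using tendsto_powr'[OF tendsto_ident_at[of x "{0..1}"] tendsto_const, of "1 + \<alpha>"] ev by blast
    qed
    have c3: "continuous_on {0..1} (\<lambda>\<tau>::real. \<tau> * (f' s * d))" by (intro continuous_intros)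
    have c4: "continuous_on {0..1} (\<lambda>\<tau>::real. C * \<tau> powr (1 + \<alpha>))" by (intro continuous_on_mult continuous_on_const cp)
    show "continuous_on {0..1} h"
      unfolding h_def by (intro continuous_on_diff cf c3 c4)
  qed simp
  then show ?thesis
    by (simp add: h_def C_def d_def)
qed




lemma tangent1:
  fixes f f' :: "real \<Rightarrow> real"
  assumes deriv: "\<And>s. (f has_real_derivative f' s) (at s)"
    and cvx: "convex_on UNIV f"
  shows "f r + f' r * (u - r) \<le> f u"
  using convex_on_imp_above_tangent[OF cvx, of r u "f' r"] deriv[of r] by auto

lemma young_aux:
  fixes v \<alpha> :: real
  assumes a: "0 < \<alpha>" "\<alpha> \<le> 1" and v: "0 \<le> v"
  shows "v powr (1 + \<alpha>) \<le> \<alpha> * v powr ((1 + \<alpha>) / \<alpha>) + (1 - \<alpha>)"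
proof (cases "v = 0")
  case True then show ?thesis using a by simp
next
  case False
  have "(v powr ((1 + \<alpha>) / \<alpha>)) powr \<alpha> * 1 powr (1 - \<alpha>) \<le> \<alpha> * v powr ((1 + \<alpha>) / \<alpha>) + (1 - \<alpha>) * 1"
    using False v a by (intro Youngs_inequality_0) auto
  moreover have "(v powr ((1 + \<alpha>) / \<alpha>)) powr \<alpha> = v powr (1 + \<alpha>)"
    using a by (simp add: powr_powr)
  ultimately show ?thesis by simp
qed

lemma pow_sum_aux:
  fixes a b p :: real
  assumes "0 \<le> a" "0 \<le> b" "1 \<le> p"
  shows "(a + b) powr p \<le> 2 powr (p - 1) * (a powr p + b powr p)"
proof -
  have g1: "1 \<le> 2 powr (p - 1)" using assms by (intro ge_one_powr_ge_zero) auto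
  consider "a = 0" | "b = 0" | "0 < a" "0 < b" using assms by linarith
  then show ?thesis
  proof cases
    case 1 then show ?thesis using g1 mult_right_mono[OF g1, of "b powr p"] by simp
  next
    case 2 then show ?thesis using g1 mult_right_mono[OF g1, of "a powr p"] by simp
  next
    case 3
    have "((1 - 1/2) *\<^sub>R a + (1/2) *\<^sub>R b) powr p \<le> (1 - 1/2) * a powr p + (1/2) * b powr p"
      using convex_onD[OF powr_convex[OF assms(3)], of "1/2" a b] 3 by auto
    then have h: "((a + b) / 2) powr p \<le> (a powr p + b powr p) / 2" by (simp add: field_simps)
    have "(a + b) powr p = 2 powr p * ((a + b) / 2) powr p"
      using 3 by (simp add: powr_divide)
    also have "\<dots> \<le> 2 powr p * ((a powr p + b powr p) / 2)"
      by (intro mult_left_mono h) auto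
    also have "\<dots> = 2 powr (p - 1) * (a powr p + b powr p)"
      by (simp add: powr_diff)
    finally show ?thesis .
  qed
qed

lemma cocoerc:
  fixes f f' :: "real \<Rightarrow> real"
  assumes deriv: "\<And>s. (f has_real_derivative f' s) (at s)"
    and hold: "\<And>s s'. \<bar>f' s - f' s'\<bar> \<le> L * \<bar>s - s'\<bar> powr \<alpha>"
    and cvx: "convex_on UNIV f"
    and a: "0 < \<alpha>" and L: "0 < L"
    and desc: "\<And>s s'. f s' \<le> f s + f' s * (s' - s) + L / (1 + \<alpha>) * \<bar>s' - s\<bar> powr (1 + \<alpha>)"
  shows "\<bar>f' s - f' r\<bar> powr ((1 + \<alpha>) / \<alpha>) \<le> (1 + \<alpha>) / \<alpha> * L powr (1 / \<alpha>) * (f s - f r - f' r * (s - r))"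
proof -
  define g where "g = f' s - f' r"
  define \<rho> where "\<rho> = (\<bar>g\<bar> / L) powr (1 / \<alpha>)"
  define u where "u = s - \<rho> * sgn g"
  have D0: "0 \<le> f s - f r - f' r * (s - r)" using tangent1[OF deriv cvx, of r s] by simp
  show ?thesis
  proof (cases "g = 0")
    case True then show ?thesis using D0 a L by (simp add: g_def)
  next
    case False
    have rho0: "0 \<le> \<rho>" by (simp add: \<rho>_def)
    have "f r + f' r * (u - r) \<le> f u" by (rule tangent1[OF deriv cvx])
    also have "f u \<le> f s + f' s * (u - s) + L / (1 + \<alpha>) * \<bar>u - s\<bar> powr (1 + \<alpha>)" by (rule desc)
    finally have A: "f r + f' r * (u - r) \<le> f s + f' s * (u - s) + L / (1 + \<alpha>) * \<rho> powr (1 + \<alpha>)"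
      using rho0 False by (simp add: u_def abs_mult abs_sgn_eq)
    have "- g * (u - s) = \<bar>g\<bar> * \<rho>"
      using False by (cases "g > 0") (auto simp: u_def)
    with A have B: "\<bar>g\<bar> * \<rho> - L / (1 + \<alpha>) * \<rho> powr (1 + \<alpha>) \<le> f s - f r - f' r * (s - r)"
      by (simp add: g_def algebra_simps)
    have rpa: "\<rho> powr \<alpha> = \<bar>g\<bar> / L"
      using a L by (simp add: \<rho>_def powr_powr)
    have "\<rho> powr (1 + \<alpha>) = \<rho> * (\<bar>g\<bar> / L)"
      using rho0 rpa by (simp add: powr_add)
    then have "L * \<rho> powr (1 + \<alpha>) = \<bar>g\<bar> * \<rho>" using L by simp
    then have C: "\<bar>g\<bar> * \<rho> - L / (1 + \<alpha>) * \<rho> powr (1 + \<alpha>) = \<alpha> / (1 + \<alpha>) * (\<bar>g\<bar> * \<rho>)"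
      using a by (simp add: field_simps)
    have E: "\<bar>g\<bar> powr ((1 + \<alpha>) / \<alpha>) = L powr (1 / \<alpha>) * (\<bar>g\<bar> * \<rho>)"
    proof -
      have "(1 + \<alpha>) / \<alpha> = 1 + 1 / \<alpha>" using a by (simp add: field_simps)
      then have "\<bar>g\<bar> powr ((1 + \<alpha>) / \<alpha>) = \<bar>g\<bar> * \<bar>g\<bar> powr (1 / \<alpha>)"
        by (simp add: powr_add)
      moreover have "\<rho> = \<bar>g\<bar> powr (1 / \<alpha>) / L powr (1 / \<alpha>)"
        by (simp add: \<rho>_def powr_divide)
      ultimately show ?thesis using L by simp
    qed
    have "\<bar>g\<bar> powr ((1 + \<alpha>) / \<alpha>) = (1 + \<alpha>) / \<alpha> * L powr (1 / \<alpha>) * (\<alpha> / (1 + \<alpha>) * (\<bar>g\<bar> * \<rho>))"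
    proof -
      have "(1 + \<alpha>) / \<alpha> * (\<alpha> / (1 + \<alpha>)) = 1" using a by (simp add: divide_simps)
      then show ?thesis using E by (metis (no_types, lifting) mult.assoc mult.left_commute mult_1)
    qed
    also have "\<dots> \<le> (1 + \<alpha>) / \<alpha> * L powr (1 / \<alpha>) * (f s - f r - f' r * (s - r))"
      using B C a by (intro mult_left_mono) auto
    finally show ?thesis by (simp add: g_def)
  qed
qed




locale setting =
  fixes X :: "(real ^ 'd) set" and Y :: "real set"
    and \<rho> :: "((real ^ 'd) \<times> real) measure"
    and K :: "real ^ 'd \<Rightarrow> real ^ 'd \<Rightarrow> real"
    and Kx :: "real ^ 'd \<Rightarrow> 'h::{real_inner, banach, second_countable_topology}"
    and \<phi> dphi :: "real \<Rightarrow> real \<Rightarrow> real"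
    and \<alpha> L :: real
  assumes prob: "prob_space \<rho>"
    and space_rho: "space \<rho> = X \<times> Y"
    and sets_rho: "sets \<rho> = sets (restrict_space borel (X \<times> Y))"
    and K_feat: "\<forall>x\<in>X. \<forall>x'\<in>X. K x x' = Kx x \<bullet> Kx x'"
    and K_cont: "continuous_on (X \<times> X) (\<lambda>p. K (fst p) (snd p))"
    and K_bdd: "bdd_above ((\<lambda>x. sqrt (K x x)) ` X)"
    and phi_nonneg: "\<forall>y\<in>Y. \<forall>s. 0 \<le> \<phi> y s"
    and phi_meas: "(\<lambda>p. \<phi> (fst p) (snd p)) \<in> borel_measurable (restrict_space borel (Y \<times> UNIV))"
    and phi_convex: "\<forall>y\<in>Y. convex_on UNIV (\<phi> y)"
    and phi_deriv: "\<forall>y\<in>Y. \<forall>s. (\<phi> y has_real_derivative dphi y s) (at s)"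
    and alpha: "0 < \<alpha>" "\<alpha> \<le> 1"
    and L_pos: "0 < L"
    and holder: "\<forall>y\<in>Y. \<forall>s s'. \<bar>dphi y s - dphi y s'\<bar> \<le> L * \<bar>s - s'\<bar> powr \<alpha>"
    and bdd0: "bdd_above ((\<lambda>y. \<phi> y 0) ` Y)"
begin

abbreviation "\<kappa> \<equiv> kappa X K"

lemma XY_ne: "X \<noteq> {}" "Y \<noteq> {}"
  using prob_space.not_empty[OF prob] space_rho by auto

lemma normK: "x \<in> X \<Longrightarrow> norm (Kx x) \<le> \<kappa>"
proof -
  assume x: "x \<in> X"
  have "norm (Kx x) = sqrt (K x x)" using K_feat x by (simp add: norm_eq_sqrt_inner)
  also have "\<dots> \<le> \<kappa>" unfolding kappa_def by (rule cSUP_upper[OF x K_bdd])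
  finally show ?thesis .
qed

lemma kappa_nonneg: "0 \<le> \<kappa>"
  using XY_ne(1) normK norm_ge_zero order_trans by blast

lemma eval_bound: "x \<in> X \<Longrightarrow> \<bar>f \<bullet> Kx x\<bar> \<le> norm f * \<kappa>"
  by (meson Cauchy_Schwarz_ineq2 mult_left_mono norm_ge_zero normK order_trans)

lemma K_bound: "x \<in> X \<Longrightarrow> x' \<in> X \<Longrightarrow> \<bar>Kx x \<bullet> Kx x'\<bar> \<le> \<kappa> * \<kappa>"
  by (meson Cauchy_Schwarz_ineq2 kappa_nonneg mult_mono norm_ge_zero normK order_trans)

lemma Kx_cont: "continuous_on X Kx"
  unfolding continuous_on_iff
proof (intro ballI allI impI)
  fix x0 and e :: real assume x0: "x0 \<in> X" and e: "0 < e"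
  define g where "g = (\<lambda>q. K q q - 2 * K q x0 + K x0 x0)"
  have cg: "continuous_on X g"
    unfolding g_def
    by (intro continuous_intros continuous_on_compose2[OF K_cont, of X "\<lambda>q. (q, q)", simplified]
        continuous_on_compose2[OF K_cont, of X "\<lambda>q. (q, x0)", simplified]) (auto simp: x0)
  have g0: "g x0 = 0" by (simp add: g_def)
  obtain d where d: "d > 0" "\<And>x'. x' \<in> X \<Longrightarrow> dist x' x0 < d \<Longrightarrow> dist (g x') (g x0) < e\<^sup>2"
    using cg x0 e unfolding continuous_on_iff by (meson zero_less_power)
  show "\<exists>d>0. \<forall>x'\<in>X. dist x' x0 < d \<longrightarrow> dist (Kx x') (Kx x0) < e"
  proof (intro exI[of _ d] conjI ballI impI d)
    fix x' assume x': "x' \<in> X" "dist x' x0 < d"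
    have "(dist (Kx x') (Kx x0))\<^sup>2 = g x'"
      using x' x0 K_feat
      by (simp add: dist_norm power2_norm_eq_inner g_def inner_diff_left inner_diff_right inner_commute)
    also have "\<dots> < e\<^sup>2" using d(2)[OF x'] g0 by (simp add: dist_real_def)
    finally show "dist (Kx x') (Kx x0) < e"
      using e by (simp add: power_less_imp_less_base)
  qed
qed

lemma meas_rho: "measurable \<rho> N = measurable (restrict_space borel (X \<times> Y)) N"
  by (rule measurable_cong_sets[OF sets_rho refl])

lemma cont_meas: "continuous_on (X \<times> Y) g \<Longrightarrow> g \<in> borel_measurable \<rho>"
  unfolding meas_rho by (rule borel_measurable_continuous_on_restrict)

lemma Kx_meas: "(\<lambda>p. Kx (fst p)) \<in> borel_measurable \<rho>"
  by (intro cont_meas continuous_on_compose2[OF Kx_cont] continuous_intros) auto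

lemma evalK_meas: "(\<lambda>p. f \<bullet> Kx (fst p)) \<in> borel_measurable \<rho>"
  using Kx_meas by measurable

lemma dphi_meas: "(\<lambda>q. dphi (fst q) (snd q)) \<in> borel_measurable (restrict_space borel (Y \<times> UNIV))"
proof (rule borel_measurable_LIMSEQ_real[where u = "\<lambda>i q. (\<phi> (fst q) (snd q + inverse (real (Suc i))) - \<phi> (fst q) (snd q)) / inverse (real (Suc i))"])
  fix q assume "q \<in> space (restrict_space borel (Y \<times> (UNIV :: real set)))"
  then have q: "fst q \<in> Y" by (auto simp: space_restrict_space)
  have "((\<lambda>h. (\<phi> (fst q) (snd q + h) - \<phi> (fst q) (snd q)) / h) \<longlongrightarrow> dphi (fst q) (snd q)) (at 0)"
    using phi_deriv q unfolding DERIV_def by blast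
  moreover have "filterlim (\<lambda>i. inverse (real (Suc i))) (at 0) sequentially"
    unfolding filterlim_at using LIMSEQ_inverse_real_of_nat by auto
  ultimately show "(\<lambda>i. (\<phi> (fst q) (snd q + inverse (real (Suc i))) - \<phi> (fst q) (snd q)) / inverse (real (Suc i))) \<longlonglongrightarrow> dphi (fst q) (snd q)"
    by (rule filterlim_compose)
next
  fix i
  define c where "c = inverse (real (Suc i))"
  have m: "(\<lambda>q::real\<times>real. (fst q, snd q + c)) \<in> measurable (restrict_space borel (Y \<times> UNIV)) (restrict_space borel (Y \<times> UNIV))"
    by (intro measurable_restrict_space3 borel_measurable_continuous_onI) (auto intro!: continuous_intros)
  have "(\<lambda>q. \<phi> (fst q) (snd q + c)) \<in> borel_measurable (restrict_space borel (Y \<times> UNIV))"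
    using measurable_compose[OF m phi_meas] by simp
  then show "(\<lambda>q. (\<phi> (fst q) (snd q + inverse (real (Suc i))) - \<phi> (fst q) (snd q)) / inverse (real (Suc i))) \<in> borel_measurable (restrict_space borel (Y \<times> UNIV))"
    using phi_meas unfolding c_def by measurable
qed

lemma pair_meas:
  fixes r :: "_ \<Rightarrow> real"
  assumes r: "r \<in> borel_measurable \<rho>"
  shows "(\<lambda>p. (snd p, r p)) \<in> measurable \<rho> (restrict_space borel (Y \<times> UNIV))"
proof (rule measurable_restrict_space2)
  show "(\<lambda>p. (snd p, r p)) \<in> space \<rho> \<rightarrow> Y \<times> UNIV"
  proof (rule Pi_I)
    fix p assume "p \<in> space \<rho>"
    then have "snd p \<in> Y" using space_rho by (simp add: mem_Times_iff)
    then show "(snd p, r p) \<in> Y \<times> UNIV" by simp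
  qed
  have "snd \<in> borel_measurable \<rho>" by (rule cont_meas) (rule continuous_on_snd[OF continuous_on_id])
  then have "(\<lambda>p. (snd p, r p)) \<in> measurable \<rho> (borel \<Otimes>\<^sub>M borel)"
    by (rule measurable_Pair[OF _ r])
  then show "(\<lambda>p. (snd p, r p)) \<in> borel_measurable \<rho>" by (simp add: borel_prod)
qed

lemma phi_comp_meas: "r \<in> borel_measurable \<rho> \<Longrightarrow> (\<lambda>p. \<phi> (snd p) (r p)) \<in> borel_measurable \<rho>"
  using measurable_compose[OF pair_meas phi_meas] by simp

lemma dphi_comp_meas: "r \<in> borel_measurable \<rho> \<Longrightarrow> (\<lambda>p. dphi (snd p) (r p)) \<in> borel_measurable \<rho>"
  using measurable_compose[OF pair_meas dphi_meas] by simp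

end



context setting begin

lemma desc_y: "y \<in> Y \<Longrightarrow> \<phi> y s' \<le> \<phi> y s + dphi y s * (s' - s) + L / (1 + \<alpha>) * \<bar>s' - s\<bar> powr (1 + \<alpha>)"
proof -
  assume y: "y \<in> Y"
  show ?thesis
  proof (rule descent1[where f' = "dphi y"])
    show "\<And>s. (\<phi> y has_real_derivative dphi y s) (at s)" using phi_deriv y by blast
    show "\<And>s s'. \<bar>dphi y s - dphi y s'\<bar> \<le> L * \<bar>s - s'\<bar> powr \<alpha>" using holder y by blast
  qed (use alpha L_pos in simp_all)
qed

lemma coco_y: "y \<in> Y \<Longrightarrow> \<bar>dphi y s - dphi y r\<bar> powr ((1 + \<alpha>) / \<alpha>)
   \<le> (1 + \<alpha>) / \<alpha> * L powr (1 / \<alpha>) * (\<phi> y s - \<phi> y r - dphi y r * (s - r))"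
proof -
  assume y: "y \<in> Y"
  show ?thesis
  proof (rule cocoerc[where f = "\<phi> y"])
    show "\<And>s. (\<phi> y has_real_derivative dphi y s) (at s)" using phi_deriv y by blast
    show "\<And>s s'. \<bar>dphi y s - dphi y s'\<bar> \<le> L * \<bar>s - s'\<bar> powr \<alpha>" using holder y by blast
    show "convex_on UNIV (\<phi> y)" using phi_convex y by blast
    show "\<And>s s'. \<phi> y s' \<le> \<phi> y s + dphi y s * (s' - s) + L / (1 + \<alpha>) * \<bar>s' - s\<bar> powr (1 + \<alpha>)"
      by (rule desc_y[OF y])
  qed (use alpha L_pos in simp_all)
qed

definition "B0 = (SUP y\<in>Y. \<phi> y 0)"
definition "B1 = B0 + L / (1 + \<alpha>)"

lemma B0: "y \<in> Y \<Longrightarrow> \<phi> y 0 \<le> B0"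
  unfolding B0_def by (rule cSUP_upper[OF _ bdd0])

lemma B0_nonneg: "0 \<le> B0"
proof -
  obtain y where y: "y \<in> Y" using XY_ne(2) by blast
  have "0 \<le> \<phi> y 0" using phi_nonneg y by blast
  then show ?thesis using B0[OF y] by linarith
qed

lemma B1_nonneg: "0 \<le> B1"
  unfolding B1_def using B0_nonneg alpha L_pos by simp

lemma dphi0: "y \<in> Y \<Longrightarrow> \<bar>dphi y 0\<bar> \<le> B1"
proof -
  assume y: "y \<in> Y"
  define d where "d = dphi y 0"
  consider "d = 0" | "d > 0" | "d < 0" by linarith
  then show ?thesis
  proof cases
    case 1 then show ?thesis using B1_nonneg by (simp add: d_def)
  next
    case 2
    have "0 \<le> \<phi> y (-1)" using phi_nonneg y by auto
    also have "\<dots> \<le> \<phi> y 0 + d * (-1) + L / (1 + \<alpha>) * \<bar>-1 - 0\<bar> powr (1 + \<alpha>)"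
      using desc_y[OF y, of "-1" 0] by (simp add: d_def)
    finally show ?thesis using B0[OF y] 2 by (simp add: d_def B1_def)
  next
    case 3
    have "0 \<le> \<phi> y 1" using phi_nonneg y by auto
    also have "\<dots> \<le> \<phi> y 0 + d * 1 + L / (1 + \<alpha>) * \<bar>1 - 0\<bar> powr (1 + \<alpha>)"
      using desc_y[OF y, of 1 0] by (simp add: d_def)
    finally show ?thesis using B0[OF y] 3 by (simp add: d_def B1_def)
  qed
qed

lemma dphi_bound: "y \<in> Y \<Longrightarrow> \<bar>s\<bar> \<le> R \<Longrightarrow> \<bar>dphi y s\<bar> \<le> B1 + L * R powr \<alpha>"
proof -
  assume y: "y \<in> Y" and s: "\<bar>s\<bar> \<le> R"
  have "\<bar>dphi y s\<bar> \<le> \<bar>dphi y 0\<bar> + \<bar>dphi y s - dphi y 0\<bar>" by linarith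
  also have "\<dots> \<le> B1 + L * \<bar>s - 0\<bar> powr \<alpha>"
  proof (rule add_mono)
    show "\<bar>dphi y 0\<bar> \<le> B1" by (rule dphi0[OF y])
    show "\<bar>dphi y s - dphi y 0\<bar> \<le> L * \<bar>s - 0\<bar> powr \<alpha>" using holder y by blast
  qed
  also have "\<dots> \<le> B1 + L * R powr \<alpha>"
    using s alpha L_pos by (intro add_left_mono mult_left_mono powr_mono2) auto
  finally show ?thesis .
qed

lemma phi_bound: "y \<in> Y \<Longrightarrow> \<bar>s\<bar> \<le> R \<Longrightarrow> \<phi> y s \<le> B0 + B1 * R + L / (1 + \<alpha>) * R powr (1 + \<alpha>)"
proof -
  assume y: "y \<in> Y" and s: "\<bar>s\<bar> \<le> R"
  have "\<phi> y s \<le> \<phi> y 0 + dphi y 0 * (s - 0) + L / (1 + \<alpha>) * \<bar>s - 0\<bar> powr (1 + \<alpha>)"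
    by (rule desc_y[OF y])
  also have "dphi y 0 * (s - 0) \<le> B1 * R"
  proof -
    have "dphi y 0 * (s - 0) \<le> \<bar>dphi y 0\<bar> * \<bar>s\<bar>" by (simp add: abs_mult[symmetric])
    also have "\<dots> \<le> B1 * R" using dphi0[OF y] s by (intro mult_mono) auto
    finally show ?thesis .
  qed
  also have "L / (1 + \<alpha>) * \<bar>s - 0\<bar> powr (1 + \<alpha>) \<le> L / (1 + \<alpha>) * R powr (1 + \<alpha>)"
    using s alpha L_pos by (intro mult_left_mono powr_mono2) auto
  finally show ?thesis using B0[OF y] by simp
qed

lemma int_bdd:
  fixes f :: "_ \<Rightarrow> 'b::{banach,second_countable_topology}"
  assumes "f \<in> borel_measurable \<rho>" "\<And>p. p \<in> space \<rho> \<Longrightarrow> norm (f p) \<le> B"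
  shows "integrable \<rho> f"
proof -
  interpret prob_space \<rho> by (rule prob)
  show ?thesis by (rule integrable_const_bound[where B = B]) (use assms in auto)
qed

lemma space_fst: "p \<in> space \<rho> \<Longrightarrow> fst p \<in> X" and space_snd: "p \<in> space \<rho> \<Longrightarrow> snd p \<in> Y"
  using space_rho by (auto simp: mem_Times_iff)

lemma eval_bound': "p \<in> space \<rho> \<Longrightarrow> \<bar>f \<bullet> Kx (fst p)\<bar> \<le> norm f * \<kappa>"
  by (rule eval_bound[OF space_fst])

lemma I1: "integrable \<rho> (\<lambda>p. \<phi> (snd p) (f \<bullet> Kx (fst p)))"
proof (rule int_bdd)
  show "(\<lambda>p. \<phi> (snd p) (f \<bullet> Kx (fst p))) \<in> borel_measurable \<rho>"
    by (rule phi_comp_meas[OF evalK_meas])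
  fix p assume p: "p \<in> space \<rho>"
  have "0 \<le> \<phi> (snd p) (f \<bullet> Kx (fst p))" using phi_nonneg space_snd[OF p] by auto
  then show "norm (\<phi> (snd p) (f \<bullet> Kx (fst p))) \<le> B0 + B1 * (norm f * \<kappa>) + L / (1 + \<alpha>) * (norm f * \<kappa>) powr (1 + \<alpha>)"
    using phi_bound[OF space_snd[OF p] eval_bound'[OF p]] by simp
qed

lemma dphi_bound': "p \<in> space \<rho> \<Longrightarrow> \<bar>dphi (snd p) (f \<bullet> Kx (fst p))\<bar> \<le> B1 + L * (norm f * \<kappa>) powr \<alpha>"
  by (rule dphi_bound[OF space_snd eval_bound'])

lemma I2: "integrable \<rho> (\<lambda>p. dphi (snd p) (f \<bullet> Kx (fst p)) *\<^sub>R Kx (fst p))"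
proof (rule int_bdd)
  show "(\<lambda>p. dphi (snd p) (f \<bullet> Kx (fst p)) *\<^sub>R Kx (fst p)) \<in> borel_measurable \<rho>"
    by (intro borel_measurable_scaleR dphi_comp_meas evalK_meas Kx_meas)
  fix p assume p: "p \<in> space \<rho>"
  show "norm (dphi (snd p) (f \<bullet> Kx (fst p)) *\<^sub>R Kx (fst p)) \<le> (B1 + L * (norm f * \<kappa>) powr \<alpha>) * \<kappa>"
  proof -
    have "0 \<le> B1 + L * (norm f * \<kappa>) powr \<alpha>" using B1_nonneg L_pos by simp
    then show ?thesis
      using dphi_bound'[OF p, of f] normK[OF space_fst[OF p]] by (simp add: mult_mono)
  qed
qed

lemma I3: "integrable \<rho> (\<lambda>p. \<bar>dphi (snd p) (f \<bullet> Kx (fst p))\<bar> powr (1 + \<alpha>))"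
proof (rule int_bdd)
  show "(\<lambda>p. \<bar>dphi (snd p) (f \<bullet> Kx (fst p))\<bar> powr (1 + \<alpha>)) \<in> borel_measurable \<rho>"
    using dphi_comp_meas[OF evalK_meas] by measurable
  fix p assume p: "p \<in> space \<rho>"
  show "norm (\<bar>dphi (snd p) (f \<bullet> Kx (fst p))\<bar> powr (1 + \<alpha>)) \<le> (B1 + L * (norm f * \<kappa>) powr \<alpha>) powr (1 + \<alpha>)"
    using dphi_bound'[OF p] alpha by (simp add: powr_mono2)
qed

lemma gen_err_eq: "gen_err \<rho> \<phi> Kx f = (\<integral>p. \<phi> (snd p) (f \<bullet> Kx (fst p)) \<partial>\<rho>)"
  by (simp add: gen_err_def eval_h_def)

lemma grad_eq: "grad_err \<rho> dphi Kx f = (\<integral>p. dphi (snd p) (f \<bullet> Kx (fst p)) *\<^sub>R Kx (fst p) \<partial>\<rho>)"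
  by (simp add: grad_err_def eval_h_def)

lemma gen_err_nonneg: "0 \<le> gen_err \<rho> \<phi> Kx f"
  unfolding gen_err_eq
proof (rule integral_nonneg_AE, rule AE_I2)
  fix p assume "p \<in> space \<rho>"
  then show "0 \<le> \<phi> (snd p) (f \<bullet> Kx (fst p))" using phi_nonneg space_snd by blast
qed

lemma grad_inner: "grad_err \<rho> dphi Kx f \<bullet> g = (\<integral>p. (dphi (snd p) (f \<bullet> Kx (fst p)) *\<^sub>R Kx (fst p)) \<bullet> g \<partial>\<rho>)"
  unfolding grad_eq by (rule integral_inner_left[symmetric]) (rule I2)

lemma GD: "gen_err \<rho> \<phi> Kx (f + g) \<le> gen_err \<rho> \<phi> Kx f + grad_err \<rho> dphi Kx f \<bullet> g + L / (1 + \<alpha>) * (norm g * \<kappa>) powr (1 + \<alpha>)"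
proof -
  interpret prob_space \<rho> by (rule prob)
  define C where "C = L / (1 + \<alpha>) * (norm g * \<kappa>) powr (1 + \<alpha>)"
  have i1: "integrable \<rho> (\<lambda>p. \<phi> (snd p) (f \<bullet> Kx (fst p)))" by (rule I1)
  have i2: "integrable \<rho> (\<lambda>p. (dphi (snd p) (f \<bullet> Kx (fst p)) *\<^sub>R Kx (fst p)) \<bullet> g)"
    by (rule integrable_inner_left) (rule I2)
  have i3: "integrable \<rho> (\<lambda>p. C)" by simp
  have i12: "integrable \<rho> (\<lambda>p. \<phi> (snd p) (f \<bullet> Kx (fst p)) + (dphi (snd p) (f \<bullet> Kx (fst p)) *\<^sub>R Kx (fst p)) \<bullet> g)"
    by (rule Bochner_Integration.integrable_add[OF i1 i2])
  have "gen_err \<rho> \<phi> Kx (f + g) \<le> (\<integral>p. \<phi> (snd p) (f \<bullet> Kx (fst p)) + (dphi (snd p) (f \<bullet> Kx (fst p)) *\<^sub>R Kx (fst p)) \<bullet> g + C \<partial>\<rho>)"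
    unfolding gen_err_eq
  proof (rule integral_mono)
    show "integrable \<rho> (\<lambda>p. \<phi> (snd p) ((f + g) \<bullet> Kx (fst p)))" by (rule I1)
    show "integrable \<rho> (\<lambda>p. \<phi> (snd p) (f \<bullet> Kx (fst p)) + (dphi (snd p) (f \<bullet> Kx (fst p)) *\<^sub>R Kx (fst p)) \<bullet> g + C)"
      by (rule Bochner_Integration.integrable_add[OF i12 i3])
    fix p assume p: "p \<in> space \<rho>"
    have "\<phi> (snd p) ((f + g) \<bullet> Kx (fst p)) \<le> \<phi> (snd p) (f \<bullet> Kx (fst p)) + dphi (snd p) (f \<bullet> Kx (fst p)) * ((f + g) \<bullet> Kx (fst p) - f \<bullet> Kx (fst p))
       + L / (1 + \<alpha>) * \<bar>(f + g) \<bullet> Kx (fst p) - f \<bullet> Kx (fst p)\<bar> powr (1 + \<alpha>)"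
      by (rule desc_y[OF space_snd[OF p]])
    also have "(f + g) \<bullet> Kx (fst p) - f \<bullet> Kx (fst p) = g \<bullet> Kx (fst p)" by (simp add: inner_add_left)
    also have "L / (1 + \<alpha>) * \<bar>g \<bullet> Kx (fst p)\<bar> powr (1 + \<alpha>) \<le> C"
      unfolding C_def using eval_bound'[OF p, of g] alpha L_pos by (intro mult_left_mono powr_mono2) auto
    finally show "\<phi> (snd p) ((f + g) \<bullet> Kx (fst p)) \<le> \<phi> (snd p) (f \<bullet> Kx (fst p)) + (dphi (snd p) (f \<bullet> Kx (fst p)) *\<^sub>R Kx (fst p)) \<bullet> g + C"
      by (simp add: inner_commute)
  qed
  also have "\<dots> = gen_err \<rho> \<phi> Kx f + grad_err \<rho> dphi Kx f \<bullet> g + C"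
    unfolding gen_err_eq grad_inner
    using i1 i2 i3 i12 by (simp add: prob_space)
  finally show ?thesis by (simp add: C_def)
qed

end



lemma ogd_cong: "(\<forall>i<n. z i = z' i) \<Longrightarrow> ogd \<eta> dphi Kx z n = ogd \<eta> dphi Kx z' n"
  by (induction n) auto

lemma int_le_trick:
  fixes G H :: "_ \<Rightarrow> real"
  assumes "\<And>w. w \<in> space M \<Longrightarrow> 0 \<le> G w" "\<And>w. w \<in> space M \<Longrightarrow> G w \<le> H w" "integrable M H"
  shows "integral\<^sup>L M G \<le> integral\<^sup>L M H"
proof (cases "integrable M G")
  case True then show ?thesis using assms by (intro Bochner_Integration.integral_mono) auto
next
  case False
  then have "integral\<^sup>L M G = 0" by (rule not_integrable_integral_eq)
  moreover have "0 \<le> integral\<^sup>L M H"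
    by (rule integral_nonneg_AE, rule AE_I2) (use assms in force)
  ultimately show ?thesis by simp
qed

context setting begin

lemma grad_min_nonneg:
  assumes min: "\<forall>f. gen_err \<rho> \<phi> Kx fH \<le> gen_err \<rho> \<phi> Kx f"
  shows "0 \<le> grad_err \<rho> dphi Kx fH \<bullet> g"
proof (rule ccontr)
  define v where "v = grad_err \<rho> dphi Kx fH \<bullet> g"
  define C where "C = L / (1 + \<alpha>) * (norm g * \<kappa>) powr (1 + \<alpha>)"
  assume "\<not> 0 \<le> grad_err \<rho> dphi Kx fH \<bullet> g"
  then have v: "v < 0" by (simp add: v_def)
  have C0: "0 \<le> C" unfolding C_def using L_pos alpha by simp
  have key: "0 \<le> v + h powr \<alpha> * C" if h: "0 < h" for h :: real
  proof -
    have "gen_err \<rho> \<phi> Kx fH \<le> gen_err \<rho> \<phi> Kx (fH + h *\<^sub>R g)" using min by blast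
    also have "\<dots> \<le> gen_err \<rho> \<phi> Kx fH + grad_err \<rho> dphi Kx fH \<bullet> (h *\<^sub>R g) + L / (1 + \<alpha>) * (norm (h *\<^sub>R g) * \<kappa>) powr (1 + \<alpha>)"
      by (rule GD)
    also have "grad_err \<rho> dphi Kx fH \<bullet> (h *\<^sub>R g) = h * v" by (simp add: v_def)
    also have "L / (1 + \<alpha>) * (norm (h *\<^sub>R g) * \<kappa>) powr (1 + \<alpha>) = h * (h powr \<alpha> * C)"
    proof -
      have "(norm (h *\<^sub>R g) * \<kappa>) powr (1 + \<alpha>) = h powr (1 + \<alpha>) * (norm g * \<kappa>) powr (1 + \<alpha>)"
        using h by (simp add: powr_mult[symmetric] mult.assoc)
      also have "h powr (1 + \<alpha>) = h * h powr \<alpha>" using h by (simp add: powr_add)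
      finally show ?thesis by (simp add: C_def)
    qed
    finally have "0 \<le> h * (v + h powr \<alpha> * C)" by (simp add: algebra_simps)
    then show ?thesis using h by (simp add: zero_le_mult_iff)
  qed
  show False
  proof (cases "C = 0")
    case True then show False using key[of 1] v by simp
  next
    case False
    with C0 have Cp: "0 < C" by simp
    define h where "h = (- v / (2 * C)) powr (1 / \<alpha>)"
    have h0: "0 < h" using v Cp by (simp add: h_def divide_pos_pos)
    have "h powr \<alpha> = - v / (2 * C)" using v Cp alpha by (simp add: h_def powr_powr)
    then have "v + h powr \<alpha> * C = v / 2" using Cp by (simp add: field_simps)
    then show False using key[OF h0] v by simp
  qed
qed

end



context setting begin

lemma main_loc:
  fixes ft fH :: 'h and \<eta> :: real
  assumes min: "\<forall>f. gen_err \<rho> \<phi> Kx fH \<le> gen_err \<rho> \<phi> Kx f"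
    and eta: "0 < \<eta>"
  shows "(\<integral>w. gen_err \<rho> \<phi> Kx (ft - (\<eta> * dphi (snd w) (ft \<bullet> Kx (fst w))) *\<^sub>R Kx (fst w)) \<partial>\<rho>) - gen_err \<rho> \<phi> Kx fH
    \<le> (1 + 2 powr \<alpha> * L powr (1 + 1 / \<alpha>) * \<kappa> powr (2 * (1 + \<alpha>)) * \<eta> powr (1 + \<alpha>)) * (gen_err \<rho> \<phi> Kx ft - gen_err \<rho> \<phi> Kx fH)
      - \<eta> * (norm (grad_err \<rho> dphi Kx ft))\<^sup>2
      + 2 powr \<alpha> * L * \<kappa> powr (2 * (1 + \<alpha>)) / (1 + \<alpha>)
        * ((1 - \<alpha>) + (\<integral>p. \<bar>dphi (snd p) (fH \<bullet> Kx (fst p))\<bar> powr (1 + \<alpha>) \<partial>\<rho>)) * \<eta> powr (1 + \<alpha>)"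
proof -
  interpret prob_space \<rho> by (rule prob)
  define E where "E = gen_err \<rho> \<phi> Kx"
  define g where "g = grad_err \<rho> dphi Kx ft"
  define gH where "gH = grad_err \<rho> dphi Kx fH"
  define c where "c = (\<lambda>w. dphi (snd w) (ft \<bullet> Kx (fst w)))"
  define hH where "hH = (\<lambda>w. dphi (snd w) (fH \<bullet> Kx (fst w)))"
  define G where "G = (\<lambda>w. E (ft - (\<eta> * c w) *\<^sub>R Kx (fst w)))"
  define C1 where "C1 = L / (1 + \<alpha>) * \<eta> powr (1 + \<alpha>) * \<kappa> powr (2 * (1 + \<alpha>))"
  define H where "H = (\<lambda>w. E ft - \<eta> * ((c w *\<^sub>R Kx (fst w)) \<bullet> g) + C1 * \<bar>c w\<bar> powr (1 + \<alpha>))"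
  define IH where "IH = (\<integral>p. \<bar>hH p\<bar> powr (1 + \<alpha>) \<partial>\<rho>)"
  define \<Delta> where "\<Delta> = E ft - E fH"
  have C1_0: "0 \<le> C1" unfolding C1_def using L_pos alpha eta by simp
  have kk2: "\<kappa> powr (1 + \<alpha>) * \<kappa> powr (1 + \<alpha>) = \<kappa> powr (2 * (1 + \<alpha>))"
  proof -
    have e: "2 * (1 + \<alpha>) = (1 + \<alpha>) + (1 + \<alpha>)" by simp
    show ?thesis unfolding e by (rule powr_add[symmetric])
  qed
  have kk: "(\<kappa> * \<kappa>) powr (1 + \<alpha>) = \<kappa> powr (2 * (1 + \<alpha>))"
    by (simp only: powr_mult kk2)
  have GH: "G w \<le> H w" if w: "w \<in> space \<rho>" for w
  proof -
    define v where "v = - ((\<eta> * c w) *\<^sub>R Kx (fst w))"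
    have "G w = E (ft + v)" by (simp add: G_def v_def)
    also have "\<dots> \<le> E ft + g \<bullet> v + L / (1 + \<alpha>) * (norm v * \<kappa>) powr (1 + \<alpha>)"
      unfolding E_def g_def by (rule GD)
    also have "g \<bullet> v = - \<eta> * ((c w *\<^sub>R Kx (fst w)) \<bullet> g)"
      by (simp add: v_def inner_commute)
    also have "L / (1 + \<alpha>) * (norm v * \<kappa>) powr (1 + \<alpha>) \<le> C1 * \<bar>c w\<bar> powr (1 + \<alpha>)"
    proof -
      have "norm v * \<kappa> \<le> \<eta> * \<bar>c w\<bar> * (\<kappa> * \<kappa>)"
      proof -
        have "norm v = \<eta> * \<bar>c w\<bar> * norm (Kx (fst w))" using eta by (simp add: v_def abs_mult)
        also have "\<dots> \<le> \<eta> * \<bar>c w\<bar> * \<kappa>" using eta by (intro mult_left_mono normK space_fst w) auto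
        finally have "norm v * \<kappa> \<le> (\<eta> * \<bar>c w\<bar> * \<kappa>) * \<kappa>"
          using kappa_nonneg by (rule mult_right_mono)
        then show ?thesis by (simp add: mult.assoc)
      qed
      then have "(norm v * \<kappa>) powr (1 + \<alpha>) \<le> (\<eta> * \<bar>c w\<bar> * (\<kappa> * \<kappa>)) powr (1 + \<alpha>)"
        using alpha kappa_nonneg by (intro powr_mono2) auto
      also have "\<dots> = \<eta> powr (1 + \<alpha>) * \<bar>c w\<bar> powr (1 + \<alpha>) * \<kappa> powr (2 * (1 + \<alpha>))"
        by (simp only: powr_mult kk2 mult.assoc)
      finally have X: "(norm v * \<kappa>) powr (1 + \<alpha>) \<le> \<eta> powr (1 + \<alpha>) * \<bar>c w\<bar> powr (1 + \<alpha>) * \<kappa> powr (2 * (1 + \<alpha>))" .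
      have "L / (1 + \<alpha>) * (norm v * \<kappa>) powr (1 + \<alpha>) \<le> L / (1 + \<alpha>) * (\<eta> powr (1 + \<alpha>) * \<bar>c w\<bar> powr (1 + \<alpha>) * \<kappa> powr (2 * (1 + \<alpha>)))"
        using L_pos alpha by (intro mult_left_mono X) auto
      then show ?thesis unfolding C1_def by (simp add: mult_ac)
    qed
    finally show ?thesis by (simp add: H_def)
  qed
  have iK: "integrable \<rho> (\<lambda>w. (c w *\<^sub>R Kx (fst w)) \<bullet> g)"
    unfolding c_def by (rule integrable_inner_left) (rule I2)
  have iC: "integrable \<rho> (\<lambda>w. \<bar>c w\<bar> powr (1 + \<alpha>))" unfolding c_def by (rule I3)
  have iH: "integrable \<rho> H"
    unfolding H_def using iK iC by simp
  have intH: "integral\<^sup>L \<rho> H = E ft - \<eta> * (g \<bullet> g) + C1 * (\<integral>w. \<bar>c w\<bar> powr (1 + \<alpha>) \<partial>\<rho>)"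
  proof -
    have "g \<bullet> g = (\<integral>w. (c w *\<^sub>R Kx (fst w)) \<bullet> g \<partial>\<rho>)"
      unfolding c_def g_def by (rule grad_inner)
    then show ?thesis unfolding H_def using iK iC by (simp add: prob_space)
  qed
  have step3: "(\<integral>w. G w \<partial>\<rho>) \<le> integral\<^sup>L \<rho> H"
  proof (rule int_le_trick)
    show "\<And>w. w \<in> space \<rho> \<Longrightarrow> 0 \<le> G w" unfolding G_def E_def by (rule gen_err_nonneg)
  qed (use GH iH in auto)
  define D where "D = (\<lambda>w. \<phi> (snd w) (ft \<bullet> Kx (fst w)) - \<phi> (snd w) (fH \<bullet> Kx (fst w)) - (hH w *\<^sub>R Kx (fst w)) \<bullet> (ft - fH))"
  have iD: "integrable \<rho> D"
  proof -
    have "integrable \<rho> (\<lambda>w. (hH w *\<^sub>R Kx (fst w)) \<bullet> (ft - fH))"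
      unfolding hH_def by (rule integrable_inner_left) (rule I2)
    then show ?thesis unfolding D_def using I1[of ft] I1[of fH] by simp
  qed
  have intD: "integral\<^sup>L \<rho> D = E ft - E fH - gH \<bullet> (ft - fH)"
  proof -
    have "gH \<bullet> (ft - fH) = (\<integral>w. (hH w *\<^sub>R Kx (fst w)) \<bullet> (ft - fH) \<partial>\<rho>)"
      unfolding hH_def gH_def by (rule grad_inner)
    moreover have "integrable \<rho> (\<lambda>w. (hH w *\<^sub>R Kx (fst w)) \<bullet> (ft - fH))"
      unfolding hH_def by (rule integrable_inner_left) (rule I2)
    ultimately show ?thesis unfolding D_def E_def gen_err_eq using I1[of ft] I1[of fH] by simp
  qed
  have iIH: "integrable \<rho> (\<lambda>w. \<bar>hH w\<bar> powr (1 + \<alpha>))" unfolding hH_def by (rule I3)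
  define R where "R = (\<lambda>w. 2 powr \<alpha> * ((1 + \<alpha>) * L powr (1 / \<alpha>) * D w + (1 - \<alpha>) + \<bar>hH w\<bar> powr (1 + \<alpha>)))"
  have cR: "\<bar>c w\<bar> powr (1 + \<alpha>) \<le> R w" if w: "w \<in> space \<rho>" for w
  proof -
    have y: "snd w \<in> Y" by (rule space_snd[OF w])
    have "\<bar>c w\<bar> powr (1 + \<alpha>) \<le> (\<bar>c w - hH w\<bar> + \<bar>hH w\<bar>) powr (1 + \<alpha>)"
      using alpha by (intro powr_mono2) auto
    also have "\<dots> \<le> 2 powr (1 + \<alpha> - 1) * (\<bar>c w - hH w\<bar> powr (1 + \<alpha>) + \<bar>hH w\<bar> powr (1 + \<alpha>))"
      using alpha by (intro pow_sum_aux) auto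
    also have "\<bar>c w - hH w\<bar> powr (1 + \<alpha>) \<le> (1 + \<alpha>) * L powr (1 / \<alpha>) * D w + (1 - \<alpha>)"
    proof -
      have "\<bar>c w - hH w\<bar> powr (1 + \<alpha>) \<le> \<alpha> * \<bar>c w - hH w\<bar> powr ((1 + \<alpha>) / \<alpha>) + (1 - \<alpha>)"
        using alpha by (intro young_aux) auto
      also have "\<bar>c w - hH w\<bar> powr ((1 + \<alpha>) / \<alpha>) \<le> (1 + \<alpha>) / \<alpha> * L powr (1 / \<alpha>) * D w"
      proof -
        have "\<bar>c w - hH w\<bar> powr ((1 + \<alpha>) / \<alpha>) \<le> (1 + \<alpha>) / \<alpha> * L powr (1 / \<alpha>) *
          (\<phi> (snd w) (ft \<bullet> Kx (fst w)) - \<phi> (snd w) (fH \<bullet> Kx (fst w)) - hH w * (ft \<bullet> Kx (fst w) - fH \<bullet> Kx (fst w)))"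
          unfolding c_def hH_def by (rule coco_y[OF y])
        also have "hH w * (ft \<bullet> Kx (fst w) - fH \<bullet> Kx (fst w)) = (hH w *\<^sub>R Kx (fst w)) \<bullet> (ft - fH)"
          by (simp add: inner_diff_left inner_diff_right inner_commute algebra_simps)
        finally show ?thesis by (simp add: D_def)
      qed
      then have "\<alpha> * \<bar>c w - hH w\<bar> powr ((1 + \<alpha>) / \<alpha>) \<le> \<alpha> * ((1 + \<alpha>) / \<alpha> * L powr (1 / \<alpha>) * D w)"
        using alpha by (intro mult_left_mono) auto
      also have "\<alpha> * ((1 + \<alpha>) / \<alpha> * L powr (1 / \<alpha>) * D w) = (1 + \<alpha>) * L powr (1 / \<alpha>) * D w"
        using alpha by simp
      finally show ?thesis by linarith
    qed
    finally show ?thesis unfolding R_def by (simp add: mult_left_mono)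
  qed
  have iR: "integrable \<rho> R" unfolding R_def using iD iIH by simp
  have intR: "integral\<^sup>L \<rho> R = 2 powr \<alpha> * ((1 + \<alpha>) * L powr (1 / \<alpha>) * (E ft - E fH - gH \<bullet> (ft - fH)) + (1 - \<alpha>) + IH)"
    unfolding R_def IH_def using iD iIH intD by (simp add: prob_space)
  have gpos: "0 \<le> gH \<bullet> (ft - fH)" unfolding gH_def by (rule grad_min_nonneg[OF min])
  have intc: "(\<integral>w. \<bar>c w\<bar> powr (1 + \<alpha>) \<partial>\<rho>) \<le> 2 powr \<alpha> * ((1 + \<alpha>) * L powr (1 / \<alpha>) * \<Delta> + (1 - \<alpha>) + IH)"
  proof -
    have "(\<integral>w. \<bar>c w\<bar> powr (1 + \<alpha>) \<partial>\<rho>) \<le> integral\<^sup>L \<rho> R"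
      by (rule Bochner_Integration.integral_mono[OF iC iR cR])
    also have "\<dots> \<le> 2 powr \<alpha> * ((1 + \<alpha>) * L powr (1 / \<alpha>) * \<Delta> + (1 - \<alpha>) + IH)"
      unfolding intR \<Delta>_def using gpos L_pos alpha
      by (intro mult_left_mono add_right_mono) (auto intro!: mult_left_mono)
    finally show ?thesis .
  qed
  have "(\<integral>w. G w \<partial>\<rho>) - E fH \<le> \<Delta> - \<eta> * (g \<bullet> g) + C1 * (2 powr \<alpha> * ((1 + \<alpha>) * L powr (1 / \<alpha>) * \<Delta> + (1 - \<alpha>) + IH))"
    using step3 intH mult_left_mono[OF intc C1_0] unfolding \<Delta>_def by linarith
  also have "C1 * (2 powr \<alpha> * ((1 + \<alpha>) * L powr (1 / \<alpha>) * \<Delta> + (1 - \<alpha>) + IH))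
      = 2 powr \<alpha> * L powr (1 + 1 / \<alpha>) * \<kappa> powr (2 * (1 + \<alpha>)) * \<eta> powr (1 + \<alpha>) * \<Delta>
        + 2 powr \<alpha> * L * \<kappa> powr (2 * (1 + \<alpha>)) / (1 + \<alpha>) * ((1 - \<alpha>) + IH) * \<eta> powr (1 + \<alpha>)"
  proof -
    have "L powr (1 + 1 / \<alpha>) = L * L powr (1 / \<alpha>)" using L_pos by (simp add: powr_add)
    then show ?thesis unfolding C1_def using alpha by (simp add: field_simps)
  qed
  finally show ?thesis
    unfolding G_def c_def E_def g_def \<Delta>_def IH_def hH_def
    by (simp add: power2_norm_eq_inner algebra_simps)
qed

end


theorem mainTheorem18:
  fixes X :: "(real ^ 'd) set" and Y :: "real set"
    and \<rho> :: "((real ^ 'd) \<times> real) measure"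
    and K :: "real ^ 'd \<Rightarrow> real ^ 'd \<Rightarrow> real"
    and Kx :: "real ^ 'd \<Rightarrow> 'h::{real_inner, banach, second_countable_topology}"
    and \<phi> dphi :: "real \<Rightarrow> real \<Rightarrow> real"
    and \<alpha> L :: real
    and \<eta> :: "nat \<Rightarrow> real"
    and fH :: 'h
    and z :: "nat \<Rightarrow> (real ^ 'd) \<times> real"
    and t :: nat
  assumes prob: "prob_space \<rho>"
    and space_rho: "space \<rho> = X \<times> Y"
    and sets_rho: "sets \<rho> = sets (restrict_space borel (X \<times> Y))"
    \<comment> \<open>H_K realised as the Hilbert space 'h with feature map Kx (K_x), reproducing property
        f(x) = f \<bullet> Kx x, and H_K = closure of span of {K_x : x in X}\<close>
    and K_feat: "\<forall>x\<in>X. \<forall>x'\<in>X. K x x' = Kx x \<bullet> Kx x'"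
    and K_dense: "closure (span (Kx ` X)) = UNIV"
    and K_cont: "continuous_on (X \<times> X) (\<lambda>p. K (fst p) (snd p))"
    and K_bdd: "bdd_above ((\<lambda>x. sqrt (K x x)) ` X)"
    \<comment> \<open>loss function\<close>
    and phi_nonneg: "\<forall>y\<in>Y. \<forall>s. 0 \<le> \<phi> y s"
    and phi_meas: "(\<lambda>p. \<phi> (fst p) (snd p)) \<in> borel_measurable (restrict_space borel (Y \<times> UNIV))"
    \<comment> \<open>Assumption 1\<close>
    and phi_convex: "\<forall>y\<in>Y. convex_on UNIV (\<phi> y)"
    and phi_deriv: "\<forall>y\<in>Y. \<forall>s. (\<phi> y has_real_derivative dphi y s) (at s)"
    and alpha: "0 < \<alpha>" "\<alpha> \<le> 1"
    and L_pos: "0 < L"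
    and holder: "\<forall>y\<in>Y. \<forall>s s'. \<bar>dphi y s - dphi y s'\<bar> \<le> L * \<bar>s - s'\<bar> powr \<alpha>"
    \<comment> \<open>minimiser f_H and boundedness conditions\<close>
    and fH_min: "\<forall>f. gen_err \<rho> \<phi> Kx fH \<le> gen_err \<rho> \<phi> Kx f"
    and bdd0: "bdd_above ((\<lambda>y. \<phi> y 0) ` Y)"
    and bddH: "bdd_above ((\<lambda>(x, y). \<phi> y (eval_h fH Kx x)) ` (X \<times> Y))"
    \<comment> \<open>step sizes and samples\<close>
    and eta_pos: "\<forall>i. 0 < \<eta> i"
    and z_in: "\<forall>i. z i \<in> X \<times> Y"
    and t_pos: "1 \<le> t"
  shows
    "(let \<kappa> = kappa X K;
          a = 2 powr \<alpha> * L powr (1 + 1 / \<alpha>) * \<kappa> powr (2 * (1 + \<alpha>));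
          b = 2 powr \<alpha> * L * \<kappa> powr (2 * (1 + \<alpha>)) / (1 + \<alpha>)
              * ((1 - \<alpha>) + (\<integral>p. \<bar>dphi (snd p) (eval_h fH Kx (fst p))\<bar> powr (1 + \<alpha>) \<partial>\<rho>));
          ft = ogd \<eta> dphi Kx z t
      in (\<integral>w. gen_err \<rho> \<phi> Kx (ogd \<eta> dphi Kx (z(t := w)) (Suc t)) \<partial>\<rho>) - gen_err \<rho> \<phi> Kx fH
         \<le> (1 + a * \<eta> t powr (1 + \<alpha>)) * (gen_err \<rho> \<phi> Kx ft - gen_err \<rho> \<phi> Kx fH)
           - \<eta> t * (norm (grad_err \<rho> dphi Kx ft))\<^sup>2 + b * \<eta> t powr (1 + \<alpha>))"
  proof -
  interpret setting X Y \<rho> K Kx \<phi> dphi \<alpha> L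
    by (rule setting.intro[OF prob space_rho sets_rho K_feat K_cont K_bdd phi_nonneg phi_meas
        phi_convex phi_deriv alpha(1) alpha(2) L_pos holder bdd0])
  define ft where "ft = ogd \<eta> dphi Kx z t"
  have t0: "t \<noteq> 0" using t_pos by simp
  have ogd_eq: "ogd \<eta> dphi Kx (z(t := w)) (Suc t) = ft - (\<eta> t * dphi (snd w) (ft \<bullet> Kx (fst w))) *\<^sub>R Kx (fst w)" for w
  proof -
    have "ogd \<eta> dphi Kx (z(t := w)) t = ft"
      unfolding ft_def by (rule ogd_cong) simp
    then show ?thesis using t0 by (simp add: eval_h_def)
  qed
  have m: "(\<integral>w. gen_err \<rho> \<phi> Kx (ft - (\<eta> t * dphi (snd w) (ft \<bullet> Kx (fst w))) *\<^sub>R Kx (fst w)) \<partial>\<rho>) - gen_err \<rho> \<phi> Kx fH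
    \<le> (1 + 2 powr \<alpha> * L powr (1 + 1 / \<alpha>) * kappa X K powr (2 * (1 + \<alpha>)) * \<eta> t powr (1 + \<alpha>)) * (gen_err \<rho> \<phi> Kx ft - gen_err \<rho> \<phi> Kx fH)
      - \<eta> t * (norm (grad_err \<rho> dphi Kx ft))\<^sup>2
      + 2 powr \<alpha> * L * kappa X K powr (2 * (1 + \<alpha>)) / (1 + \<alpha>)
        * ((1 - \<alpha>) + (\<integral>p. \<bar>dphi (snd p) (fH \<bullet> Kx (fst p))\<bar> powr (1 + \<alpha>) \<partial>\<rho>)) * \<eta> t powr (1 + \<alpha>)"
    by (rule main_loc[OF fH_min]) (use eta_pos in blast)
  show ?thesis
    unfolding Let_def ogd_eq ft_def[symmetric] by (simp only: eval_h_def m)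
qed

end
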